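(* Let $\mu\in(0,1)$. Then no Gamma density $q(x)=\frac{1}{\beta^a\Gamma(a)}x^{a-1}e^{-x/\beta}$ on $(0,\infty)$ (with $a>0$, $\beta>0$) satisfies $T_M[q]=q$; that is, the equilibrium distribution of the mixed model is not a Gamma distribution.
   Context: For a probability density $p$ on $[0,\infty)$ define $S[p](x)=\int_x^\infty \frac{p(u)}{u}\,du$, $T[p](x)=\int_0^x S[p](x-v)\,S[p](v)\,dv$, and $$T_D[p](x)=\frac12\int_0^x p(x-u)\int_u^\infty \frac{p(v)}{v}\,dv\,du+\frac12\int_x^\infty \frac{p(u)}{u}\,du,$$ for $x\ge0$. For a parameter $\mu\in[0,1]$, the mixed model operator is $T_M[p]=\mu\,T_D[p]+(1-\mu)\,T[p]$, and an equilibrium distribution of the mixed model is a probability density $p$ on $[0,\infty)$ with $T_M[p]=p$. *)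

theory Defs
  imports "HOL-Analysis.Analysis"
begin

definition S_op :: "(real \<Rightarrow> real) \<Rightarrow> real \<Rightarrow> real" where
  "S_op p x = (LINT u:{x..}|lborel. p u / u)"

definition T_op :: "(real \<Rightarrow> real) \<Rightarrow> real \<Rightarrow> real" where
  "T_op p x = (LINT v:{0..x}|lborel. S_op p (x - v) * S_op p v)"

definition TD_op :: "(real \<Rightarrow> real) \<Rightarrow> real \<Rightarrow> real" where
  "TD_op p x = 1/2 * (LINT u:{0..x}|lborel. p (x - u) * (LINT v:{u..}|lborel. p v / v))
              + 1/2 * (LINT u:{x..}|lborel. p u / u)"

definition TM_op :: "real \<Rightarrow> (real \<Rightarrow> real) \<Rightarrow> real \<Rightarrow> real" where
  "TM_op \<mu> p x = \<mu> * TD_op p x + (1 - \<mu>) * T_op p x"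

definition gamma_density :: "real \<Rightarrow> real \<Rightarrow> real \<Rightarrow> real" where
  "gamma_density a \<beta> x =
     (if x > 0 then x powr (a - 1) * exp (- x / \<beta>) / (\<beta> powr a * Gamma a) else 0)"

end

theory Submission
  imports Defs
begin

lemma bridge:
  fixes f :: "real \<Rightarrow> real"
  assumes "f integrable_on A" "\<And>x. x\<in>A \<Longrightarrow> 0 \<le> f x"
    and "(\<lambda>x. indicator A x * f x) \<in> borel_measurable borel"
  shows "set_integrable lborel A f" "(LINT x:A|lborel. f x) = integral A f"
proof -
  have "set_integrable lebesgue A f"
    by (rule nonnegative_absolutely_integrable_1) (use assms in auto)
  then show 1: "set_integrable lborel A f"
    unfolding set_integrable_def using integrable_completion[of "\<lambda>x. indicator A x *\<^sub>R f x" lborel] assms(3)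
    by simp
  show "(LINT x:A|lborel. f x) = integral A f" by (rule set_borel_integral_eq_integral(2)[OF 1])
qed

lemma LINT_le_trick:
  fixes f g :: "real \<Rightarrow> real"
  assumes "set_integrable lborel A g" "\<And>x. x \<in> A \<Longrightarrow> 0 \<le> f x"
    "AE x in lborel. x \<in> A \<longrightarrow> f x \<le> g x"
  shows "(LINT x:A|lborel. f x) \<le> (LINT x:A|lborel. g x)"
proof (cases "set_integrable lborel A f")
  case True
  then show ?thesis using assms by (intro set_integral_mono_AE) auto
next
  case False
  have "(LINT x:A|lborel. f x) = 0"
    using False unfolding set_integrable_def set_lebesgue_integral_def
    by (simp add: not_integrable_integral_eq)
  moreover have "0 \<le> (LINT x:A|lborel. g x)"
    unfolding set_lebesgue_integral_def
    apply (intro integral_nonneg_AE)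
    using assms(3) apply eventually_elim
    using assms(2) by (fastforce simp: indicator_def)
  ultimately show ?thesis by simp
qed

lemma LINT_nonneg:
  fixes f :: "real \<Rightarrow> real"
  assumes "\<And>x. x \<in> A \<Longrightarrow> 0 \<le> f x"
  shows "0 \<le> (LINT x:A|lborel. f x)"
  unfolding set_lebesgue_integral_def
  using assms by (intro integral_nonneg_AE) (auto simp: indicator_def)

lemma int_powr:
  fixes x y c :: real
  assumes x: "0 < x" and xy: "x \<le> y" and c: "c \<noteq> 0"
  shows "((\<lambda>u. u powr (c-1)) has_integral (y powr c - x powr c) / c) {x..y}"
proof -
  have "((\<lambda>u. u powr (c-1)) has_integral ((\<lambda>u. u powr c / c) y - (\<lambda>u. u powr c / c) x)) {x..y}"
  proof (rule fundamental_theorem_of_calculus_interior_strong[where S="{}"])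
    show "continuous_on {x..y} (\<lambda>u. u powr c / c)"
      using x c by (intro continuous_intros) auto
    fix u assume u: "u \<in> {x<..<y} - {}"
    then have "u > 0" using x by auto
    have "((\<lambda>u. u powr c / c) has_real_derivative (c * u powr (c-1)) / c) (at u)"
      by (intro DERIV_cdivide has_real_derivative_powr \<open>u>0\<close>)
    then show "((\<lambda>u. u powr c / c) has_vector_derivative u powr (c-1)) (at u)"
      using c by (simp add: has_real_derivative_iff_has_vector_derivative[symmetric])
  qed (use xy in auto)
  then show ?thesis by (simp add: diff_divide_distrib)
qed

lemma int_inv:
  fixes x y :: real
  assumes x: "0 < x" and xy: "x \<le> y"
  shows "((\<lambda>u. u powr (1-2)) has_integral (ln y - ln x)) {x..y}"
proof -
  have "((\<lambda>u. u powr (1-2)) has_integral (ln y - ln x)) {x..y}"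
  proof (rule fundamental_theorem_of_calculus_interior_strong[where S="{}"])
    show "continuous_on {x..y} ln"
      using x by (intro continuous_intros) auto
    fix u assume u: "u \<in> {x<..<y} - {}"
    then have "u > 0" using x by auto
    have "(ln has_real_derivative inverse u) (at u)"
      by (intro DERIV_ln \<open>u>0\<close>)
    then show "(ln has_vector_derivative u powr (1-2)) (at u)"
      using \<open>u>0\<close> by (simp add: has_real_derivative_iff_has_vector_derivative[symmetric] powr_neg_one divide_inverse)
  qed (use xy in auto)
  then show ?thesis .
qed

lemma int_refl_powr:
  fixes x a :: real
  assumes x: "0 < x" and a: "0 < a"
  shows "((\<lambda>u. (x - u) powr (a-1)) has_integral x powr a / a) {0..x}"
proof -
  have "((\<lambda>u. (x - u) powr (a-1)) has_integral ((\<lambda>u. 0 - (x - u) powr a / a) x - (\<lambda>u. 0 - (x - u) powr a / a) 0)) {0..x}"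
  proof (rule fundamental_theorem_of_calculus_interior_strong[where S="{}"])
    show "continuous_on {0..x} (\<lambda>u. 0 - (x - u) powr a / a)"
      using a by (intro continuous_intros continuous_on_powr') auto
    fix u assume u: "u \<in> {0<..<x} - {}"
    then have "x - u > 0" by auto
    have "((\<lambda>u. 0 - (x - u) powr a / a) has_real_derivative 0 - ((a * (x - u) powr (a-1)) * (0 - 1)) / a) (at u)"
      by (intro DERIV_diff DERIV_const DERIV_cdivide DERIV_chain2[OF has_real_derivative_powr] derivative_intros \<open>x - u > 0\<close>)
    then show "((\<lambda>u. 0 - (x - u) powr a / a) has_vector_derivative (x - u) powr (a-1)) (at u)"
      using a by (simp add: has_real_derivative_iff_has_vector_derivative[symmetric])
  qed (use x in auto)
  then show ?thesis by simp
qed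

lemma key_ineq:
  fixes x u a :: real
  assumes "0 < u" "u < x" "a < 1"
  shows "(x - u) powr (a-1) * u powr (a-1) \<le> (x/2) powr (a-1) * (u powr (a-1) + (x - u) powr (a-1))"
proof (cases "u \<le> x/2")
  case True
  have "(x - u) powr (a-1) \<le> (x/2) powr (a-1)" using assms True by (intro powr_mono2') auto
  then have "(x - u) powr (a-1) * u powr (a-1) \<le> (x/2) powr (a-1) * u powr (a-1)"
    by (rule mult_right_mono) simp
  also have "\<dots> \<le> (x/2) powr (a-1) * (u powr (a-1) + (x - u) powr (a-1))"
    by (intro mult_left_mono) auto
  finally show ?thesis .
next
  case False
  have "u powr (a-1) \<le> (x/2) powr (a-1)" using assms False by (intro powr_mono2') auto
  then have "(x - u) powr (a-1) * u powr (a-1) \<le> (x - u) powr (a-1) * (x/2) powr (a-1)"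
    by (rule mult_left_mono) simp
  also have "\<dots> \<le> (x/2) powr (a-1) * (u powr (a-1) + (x - u) powr (a-1))"
  proof -
    have "(x - u) powr (a-1) * (x/2) powr (a-1) = (x/2) powr (a-1) * (x - u) powr (a-1)" by simp
    also have "\<dots> \<le> (x/2) powr (a-1) * (u powr (a-1) + (x - u) powr (a-1))"
      by (intro mult_left_mono) auto
    finally show ?thesis .
  qed
  finally show ?thesis .
qed

lemma conv_bound:
  fixes F G :: "real \<Rightarrow> real" and x a c1 c2 :: real
  assumes x: "0 < x" and a: "0 < a" "a < 1" and c: "0 \<le> c1" "0 \<le> c2"
    and F0: "\<And>u. 0 \<le> F u" and G0: "\<And>u. 0 \<le> G u"
    and Fb: "\<And>u. 0 < u \<Longrightarrow> u < x \<Longrightarrow> F u \<le> c1 * u powr (a-1)"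
    and Gb: "\<And>u. 0 < u \<Longrightarrow> u < x \<Longrightarrow> G u \<le> c2 * u powr (a-1)"
  shows "(LINT u:{0..x}|lborel. F (x-u) * G u) \<le> c1 * c2 * ((x/2) powr (a-1) * (2 * (x powr a / a)))"
proof -
  define g where "g = (\<lambda>u. c1 * c2 * ((x/2) powr (a-1) * (u powr (a-1) + (x - u) powr (a-1))))"
  have I1: "((\<lambda>u. u powr (a-1)) has_integral x powr a / a) {0..x}"
    using has_integral_powr_from_0[of "a-1" x] a x by simp
  have I2: "((\<lambda>u. (x - u) powr (a-1)) has_integral x powr a / a) {0..x}"
    by (rule int_refl_powr[OF x a(1)])
  have Hg: "(g has_integral c1 * c2 * ((x/2) powr (a-1) * (2 * (x powr a / a)))) {0..x}"
    unfolding g_def using has_integral_add[OF I1 I2]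
    by (intro has_integral_mult_right) simp
  have gnn: "\<And>u. 0 \<le> g u" unfolding g_def using c by auto
  have gm: "(\<lambda>u. indicator {0..x} u * g u) \<in> borel_measurable borel"
    unfolding g_def by measurable
  have B: "set_integrable lborel {0..x} g" "(LINT u:{0..x}|lborel. g u) = integral {0..x} g"
    using bridge[of g "{0..x}", OF _ _ gm] Hg gnn by (auto simp: has_integral_integrable)
  have "(LINT u:{0..x}|lborel. F (x-u) * G u) \<le> (LINT u:{0..x}|lborel. g u)"
  proof (rule LINT_le_trick[OF B(1)])
    show "\<And>u. u \<in> {0..x} \<Longrightarrow> 0 \<le> F (x - u) * G u" using F0 G0 by simp
    show "AE u in lborel. u \<in> {0..x} \<longrightarrow> F (x - u) * G u \<le> g u"
      using AE_lborel_singleton[of 0] AE_lborel_singleton[of x]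
    proof eventually_elim
      case (elim u)
      show ?case
      proof
        assume "u \<in> {0..x}"
        then have u: "0 < u" "u < x" using elim by auto
        have "F (x - u) * G u \<le> (c1 * (x - u) powr (a-1)) * (c2 * u powr (a-1))"
          using u c by (intro mult_mono Fb Gb F0 G0) auto
        also have "\<dots> = c1 * c2 * ((x - u) powr (a-1) * u powr (a-1))" by simp
        also have "\<dots> \<le> g u" unfolding g_def using c key_ineq[OF u a(2)]
          by (intro mult_left_mono) auto
        finally show "F (x - u) * G u \<le> g u" .
      qed
    qed
  qed
  also have "\<dots> = c1 * c2 * ((x/2) powr (a-1) * (2 * (x powr a / a)))"
    using B(2) Hg by (simp add: integral_unique)
  finally show ?thesis .
qed

lemma powr_to_0:
  fixes e :: real assumes "0 < e"
  shows "((\<lambda>x. x powr e) \<longlongrightarrow> 0) (at_right 0)"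
  by (rule tendsto_zero_powrI[OF tendsto_ident_at tendsto_const _ assms])
     (auto simp: eventually_at_filter)

lemma ev_small:
  fixes c :: real assumes "0 < c"
  shows "eventually (\<lambda>x. x < c) (at_right 0)"
  using order_tendstoD(2)[OF tendsto_ident_at[of 0 "{0<..}"] assms] .

lemma ev_powr_small:
  fixes e c :: real assumes "0 < e" "0 < c"
  shows "eventually (\<lambda>x. x powr e < c) (at_right 0)"
  using order_tendstoD(2)[OF powr_to_0[OF assms(1)] assms(2)] .

lemma ev_exists:
  "eventually P (at_right (0::real)) \<Longrightarrow> \<exists>x>0. P x"
  unfolding eventually_at_right_field
  by (metis field_lbound_gt_zero less_eq_real_def)

lemma inv_large:
  fixes x a d :: real
  assumes "0 < x" "x powr (1-a) < d"
  shows "1/d < x powr (a-1)"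
proof -
  have "x powr (a-1) = inverse (x powr (1-a))" using powr_minus[of x "1-a"] by simp
  moreover have "0 < x powr (1-a)" using assms by simp
  moreover have t: "0 < x powr (1-a)" using assms by simp
  moreover have d: "0 < d" using t assms by linarith
  moreover have "1/d < 1/(x powr (1-a))"
    by (rule divide_strict_left_mono) (use t d assms in auto)
  ultimately show ?thesis by (simp add: inverse_eq_divide)
qed

lemma alg_id:
  fixes z C b m P Pb x :: real
  assumes "z \<noteq> 0" "C \<noteq> 0" "b \<noteq> 0"
  shows "m/2 * ((P - Pb) / (z * C) + Pb / C) - P * (1 - x/b) / C
      = ((m / (2*z) - 1) * P - Pb * (m / (2*z) - m/2) + P * x / b) / C"
  using assms by (simp add: field_simps)

context
  fixes a \<beta> :: real
  assumes apos: "0 < a" and bpos: "0 < \<beta>"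
begin

definition CC :: real where "CC = \<beta> powr a * Gamma a"

lemma CC_pos: "0 < CC"
  unfolding CC_def using apos bpos by (simp add: Gamma_real_pos)

lemma q_pos: "x > 0 \<Longrightarrow> gamma_density a \<beta> x = x powr (a-1) * exp (-x/\<beta>) / CC"
  unfolding gamma_density_def CC_def by simp

lemma q_npos: "x \<le> 0 \<Longrightarrow> gamma_density a \<beta> x = 0"
  unfolding gamma_density_def by simp

lemma q_nonneg: "0 \<le> gamma_density a \<beta> x"
  using CC_pos by (cases "x > 0") (auto simp: q_pos q_npos)

lemma q_meas: "gamma_density a \<beta> \<in> borel_measurable borel"
  unfolding gamma_density_def by measurable

lemma q_integrable: "integrable lborel (gamma_density a \<beta>)"
proof -
  have G: "((\<lambda>t. t powr (a-1) / exp t) has_integral Gamma a) {0..}"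
    using Gamma_integral_real apos by blast
  have "set_integrable lborel {0..} (\<lambda>t. t powr (a-1) / exp t)"
    by (rule bridge(1)) (use G in \<open>auto simp: has_integral_integrable\<close>)
  then have "integrable lborel (\<lambda>t. indicator {0..} t * (t powr (a-1) / exp t))"
    unfolding set_integrable_def by simp
  from lborel_integrable_real_affine[OF this, where t=0 and c="1/\<beta>"] bpos
  have "integrable lborel (\<lambda>x. indicator {0..} (1/\<beta>*x) * ((1/\<beta>*x) powr (a-1) / exp (1/\<beta>*x)))"
    by simp
  then have "integrable lborel (\<lambda>x. \<beta> powr (a-1) / CC * (indicator {0..} (1/\<beta>*x) * ((1/\<beta>*x) powr (a-1) / exp (1/\<beta>*x))))"
    by (rule integrable_mult_right)
  also have "(\<lambda>x. \<beta> powr (a-1) / CC * (indicator {0..} (1/\<beta>*x) * ((1/\<beta>*x) powr (a-1) / exp (1/\<beta>*x)))) = gamma_density a \<beta>"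
  proof
    fix x :: real
    consider "x < 0" | "x = 0" | "x > 0" by linarith
    then show "\<beta> powr (a-1) / CC * (indicator {0..} (1/\<beta>*x) * ((1/\<beta>*x) powr (a-1) / exp (1/\<beta>*x))) = gamma_density a \<beta> x"
    proof cases
      case 1 then show ?thesis using bpos by (simp add: q_npos indicator_def zero_le_divide_iff)
    next
      case 2 then show ?thesis by (simp add: q_npos)
    next
      case 3
      then show ?thesis using bpos CC_pos
        by (simp add: q_pos indicator_def powr_divide exp_minus field_simps)
    qed
  qed
  finally show ?thesis .
qed

lemma f_set_integrable:
  assumes x: "0 < x"
  shows "set_integrable lborel {x..} (\<lambda>u. gamma_density a \<beta> u / u)"
proof (rule set_integrable_bound)
  show "set_integrable lborel {x..} (\<lambda>u. gamma_density a \<beta> u / x)"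
    unfolding set_integrable_def
    by (intro integrable_mult_indicator integrable_divide q_integrable) auto
  show "set_borel_measurable lborel {x..} (\<lambda>u. gamma_density a \<beta> u / u)"
    unfolding set_borel_measurable_def using q_meas by measurable
  show "AE u in lborel. u \<in> {x..} \<longrightarrow> norm (gamma_density a \<beta> u / u) \<le> norm (gamma_density a \<beta> u / x)"
    using x q_nonneg by (auto intro!: divide_left_mono)
qed

lemma S_eq:
  assumes x: "0 < x"
  shows "(\<lambda>u. gamma_density a \<beta> u / u) integrable_on {x..}"
    "S_op (gamma_density a \<beta>) x = integral {x..} (\<lambda>u. gamma_density a \<beta> u / u)"
  using set_borel_integral_eq_integral[OF f_set_integrable[OF x]] unfolding S_op_def by auto

lemma f_nonneg: "0 \<le> gamma_density a \<beta> u / u"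
  using q_nonneg[of u] by (cases "u > 0") (auto simp: q_npos)

lemma S_nonneg: "0 \<le> S_op (gamma_density a \<beta>) x"
  unfolding S_op_def using f_nonneg by (intro LINT_nonneg) auto

lemma pw: "u > 0 \<Longrightarrow> u powr (c - 1) / u = u powr (c - 2)" for u c :: real
proof -
  assume u: "u > 0"
  have "u powr (c - 1) = u powr ((c - 2) + 1)" by simp
  also have "\<dots> = u powr (c - 2) * u powr 1" by (rule powr_add)
  finally have "u powr (c - 1) = u powr (c - 2) * u powr 1" .
  then show ?thesis using u by simp
qed

lemma f_pos: "u > 0 \<Longrightarrow> gamma_density a \<beta> u / u = u powr (a - 2) * exp (-u/\<beta>) / CC"
  by (simp add: q_pos pw[symmetric])

lemma S_lower:
  assumes x: "0 < x" and xy: "x \<le> y"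
  shows "exp (-y/\<beta>) / CC * integral {x..y} (\<lambda>u. u powr (a-2)) \<le> S_op (gamma_density a \<beta>) x"
proof -
  have int1: "(\<lambda>u. u powr (a-2)) integrable_on {x..y}"
    using x by (intro integrable_continuous_interval continuous_intros) auto
  have "exp (-y/\<beta>) / CC * integral {x..y} (\<lambda>u. u powr (a-2)) = integral {x..y} (\<lambda>u. exp (-y/\<beta>) / CC * u powr (a-2))"
    by simp
  also have "\<dots> \<le> integral {x..y} (\<lambda>u. gamma_density a \<beta> u / u)"
  proof (rule integral_le)
    show "(\<lambda>u. exp (-y/\<beta>) / CC * u powr (a-2)) integrable_on {x..y}"
      using integrable_on_cmult_left[OF int1, of "exp (-y/\<beta>) / CC"] by simp
    show "(\<lambda>u. gamma_density a \<beta> u / u) integrable_on {x..y}"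
      using S_eq(1)[OF x] by (rule integrable_on_subinterval) auto
    fix u assume u: "u \<in> {x..y}"
    then have "u > 0" using x by auto
    have "exp (-y/\<beta>) \<le> exp (-u/\<beta>)" using u bpos by (auto simp: divide_right_mono)
    then show "exp (-y/\<beta>) / CC * u powr (a-2) \<le> gamma_density a \<beta> u / u"
      using CC_pos \<open>u > 0\<close> by (simp add: f_pos divide_right_mono mult_left_mono mult.commute)
  qed
  also have "\<dots> \<le> integral {x..} (\<lambda>u. gamma_density a \<beta> u / u)"
  proof (rule integral_subset_le)
    show "(\<lambda>u. gamma_density a \<beta> u / u) integrable_on {x..y}"
      using S_eq(1)[OF x] by (rule integrable_on_subinterval) auto
  qed (use S_eq(1)[OF x] f_nonneg in auto)
  finally show ?thesis using S_eq(2)[OF x] by simp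
qed

lemma S_upper:
  assumes a1: "a < 1" and x: "0 < x" and xb: "x \<le> \<beta>"
  shows "S_op (gamma_density a \<beta>) x \<le> (x powr (a-1) - \<beta> powr (a-1)) / ((1-a) * CC) + \<beta> powr (a-1) / CC"
proof -
  define h1 where "h1 = (\<lambda>u::real. if u \<in> {..\<beta>} then u powr (a-2) / CC else 0)"
  define h2 where "h2 = (\<lambda>u::real. \<beta> powr (a-2) / CC * exp (-(1/\<beta>)*u))"
  have P: "((\<lambda>u. u powr (a-2)) has_integral (\<beta> powr (a-1) - x powr (a-1)) / (a-1)) {x..\<beta>}"
    using int_powr[of x \<beta> "a-1"] x xb a1 by simp
  have "((\<lambda>u. u powr (a-2) / CC) has_integral (\<beta> powr (a-1) - x powr (a-1)) / (a-1) / CC) {x..\<beta>}"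
    by (rule has_integral_divide[OF P])
  then have H1: "(h1 has_integral (\<beta> powr (a-1) - x powr (a-1)) / (a-1) / CC) {x..}"
    unfolding h1_def using has_integral_restrict_Int[of "{..\<beta>}" "\<lambda>u. u powr (a-2) / CC" _ "{x..}"]
    by (simp add: Int_commute atLeastAtMost_def)
  have H2: "(h2 has_integral \<beta> powr (a-2) / CC * (exp (-(1/\<beta>)*x) / (1/\<beta>))) {x..}"
    unfolding h2_def using bpos
    by (intro has_integral_mult_right has_integral_exp_minus_to_infinity) auto
  have le: "gamma_density a \<beta> u / u \<le> h1 u + h2 u" if u: "u \<in> {x..}" for u
  proof -
    have u0: "u > 0" using u x by auto
    have h2nn: "0 \<le> h2 u" unfolding h2_def using CC_pos by auto
    show ?thesis
    proof (cases "u \<le> \<beta>")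
      case True
      have "gamma_density a \<beta> u / u = u powr (a-2) * exp (-u/\<beta>) / CC" using u0 by (rule f_pos)
      also have "\<dots> \<le> u powr (a-2) / CC"
        using CC_pos bpos u0 by (intro divide_right_mono mult_left_le) (auto simp: divide_nonneg_pos)
      also have "\<dots> = h1 u" unfolding h1_def using True by simp
      finally show ?thesis using h2nn by simp
    next
      case False
      have "gamma_density a \<beta> u / u = u powr (a-2) * exp (-u/\<beta>) / CC" using u0 by (rule f_pos)
      also have "\<dots> \<le> \<beta> powr (a-2) * exp (-u/\<beta>) / CC"
        using CC_pos bpos u0 False a1 by (intro divide_right_mono mult_right_mono powr_mono2') auto
      also have "\<dots> = h2 u" unfolding h2_def by (simp add: field_simps)
      finally show ?thesis unfolding h1_def using False by simp
    qed
  qed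
  have "S_op (gamma_density a \<beta>) x \<le> (\<beta> powr (a-1) - x powr (a-1)) / (a-1) / CC + \<beta> powr (a-2) / CC * (exp (-(1/\<beta>)*x) / (1/\<beta>))"
    unfolding S_eq(2)[OF x]
    by (rule has_integral_le[OF integrable_integral[OF S_eq(1)[OF x]] has_integral_add[OF H1 H2]]) (rule le)
  also have "\<dots> \<le> (x powr (a-1) - \<beta> powr (a-1)) / ((1-a) * CC) + \<beta> powr (a-1) / CC"
  proof -
    have "\<beta> powr (a-2) * \<beta> = \<beta> powr (a-1)"
      using pw[of \<beta> a] bpos by (simp add: field_simps)
    then have "\<beta> powr (a-2) / CC * (exp (-(1/\<beta>)*x) / (1/\<beta>)) = exp (-(1/\<beta>)*x) * (\<beta> powr (a-1) / CC)"
      by (simp add: field_simps)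
    also have "\<dots> \<le> 1 * (\<beta> powr (a-1) / CC)"
      by (rule mult_right_mono) (use x bpos CC_pos in auto)
    finally have "\<beta> powr (a-2) / CC * (exp (-(1/\<beta>)*x) / (1/\<beta>)) \<le> \<beta> powr (a-1) / CC" by simp
    moreover have "(\<beta> powr (a-1) - x powr (a-1)) / (a-1) / CC = (x powr (a-1) - \<beta> powr (a-1)) / ((1-a) * CC)"
      using a1 CC_pos by (simp add: field_simps)
    ultimately show ?thesis by linarith
  qed
  finally show ?thesis .
qed

definition AA :: "real \<Rightarrow> real" where
  "AA x = (LINT u:{0..x}|lborel. gamma_density a \<beta> (x-u) * S_op (gamma_density a \<beta>) u)"

lemma TM_expand:
  "TM_op \<mu> (gamma_density a \<beta>) x = \<mu>/2 * AA x + \<mu>/2 * S_op (gamma_density a \<beta>) x + (1-\<mu>) * T_op (gamma_density a \<beta>) x"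
proof -
  have *: "\<And>u. (LINT v:{u..}|lborel. gamma_density a \<beta> v / v) = S_op (gamma_density a \<beta>) u"
    by (simp add: S_op_def)
  show ?thesis unfolding TM_op_def TD_op_def AA_def * by (simp add: algebra_simps)
qed

lemma AA_nonneg: "0 \<le> AA x"
  unfolding AA_def using q_nonneg S_nonneg by (intro LINT_nonneg) auto

lemma T_nonneg: "0 \<le> T_op (gamma_density a \<beta>) x"
  unfolding T_op_def using S_nonneg by (intro LINT_nonneg) auto

lemma TM_ge:
  assumes "0 \<le> \<mu>" "\<mu> \<le> 1"
  shows "\<mu>/2 * S_op (gamma_density a \<beta>) x \<le> TM_op \<mu> (gamma_density a \<beta>) x"
  unfolding TM_expand using assms AA_nonneg[of x] T_nonneg[of x] by auto

lemma q_le: "x > 0 \<Longrightarrow> gamma_density a \<beta> x \<le> x powr (a-1) / CC"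
  using CC_pos bpos by (auto simp: q_pos intro!: divide_right_mono mult_left_le)

lemma case_gt1:
  assumes a1: "1 < a" and mu: "0 < \<mu>" "\<mu> < 1"
  shows "eventually (\<lambda>x. TM_op \<mu> (gamma_density a \<beta>) x \<noteq> gamma_density a \<beta> x) (at_right 0)"
proof -
  define e where "e = exp (-1/\<beta>)"
  have e0: "0 < e" unfolding e_def by simp
  define m where "m = \<mu> * e / (4 * (a-1))"
  have m0: "0 < m" unfolding m_def using e0 mu a1 by auto
  have "eventually (\<lambda>x. x powr (a-1) < min (1/2) m) (at_right 0)"
    using a1 m0 by (intro ev_powr_small) auto
  moreover have "eventually (\<lambda>x::real. x < 1) (at_right 0)" using ev_small[of 1] by simp
  moreover have "eventually (\<lambda>x::real. 0 < x) (at_right 0)" by (rule eventually_at_right_less)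
  ultimately show ?thesis
  proof eventually_elim
    case (elim x)
    define P where "P = x powr (a-1)"
    have P0: "0 \<le> P" unfolding P_def by simp
    have I: "integral {x..1} (\<lambda>u. u powr (a-2)) = (1 - P) / (a-1)"
      using integral_unique[OF int_powr[of x 1 "a-1"]] elim a1 by (simp add: P_def)
    have "e / CC * ((1 - P) / (a-1)) \<le> S_op (gamma_density a \<beta>) x"
      using S_lower[of x 1] elim I by (simp add: e_def)
    then have "\<mu>/2 * (e / CC * ((1 - P) / (a-1))) \<le> TM_op \<mu> (gamma_density a \<beta>) x"
      using mult_left_mono[of _ _ "\<mu>/2"] TM_ge[of \<mu> x] mu by (meson less_eq_real_def order_trans half_gt_zero)
    moreover have "gamma_density a \<beta> x \<le> P / CC" using q_le elim by (simp add: P_def)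
    moreover have "P / CC < \<mu>/2 * (e / CC * ((1 - P) / (a-1)))"
    proof -
      have "P < m" using elim P_def by simp
      also have "m \<le> \<mu>/2 * (e * ((1 - P) / (a-1)))"
      proof -
        have "1/2 \<le> 1 - P" using elim P_def by simp
        then have "\<mu> * e * (1/2) \<le> \<mu> * e * (1 - P)" using mu e0 by (intro mult_left_mono) auto
        have "m = \<mu> * e * (1/2) / (2*(a-1))" unfolding m_def by simp
        also have "\<dots> \<le> \<mu> * e * (1 - P) / (2*(a-1))"
          by (rule divide_right_mono) (use \<open>\<mu> * e * (1/2) \<le> \<mu> * e * (1 - P)\<close> a1 in auto)
        also have "\<dots> = \<mu>/2 * (e * ((1 - P) / (a-1)))" by simp
        finally show ?thesis .
      qed
      finally have "P / CC < (\<mu>/2 * (e * ((1 - P) / (a-1)))) / CC"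
        by (rule divide_strict_right_mono[OF _ CC_pos])
      moreover have "(\<mu>/2 * (e * ((1 - P) / (a-1)))) / CC = \<mu>/2 * (e / CC * ((1 - P) / (a-1)))"
        by simp
      ultimately show ?thesis by linarith
    qed
    ultimately show ?case by linarith
  qed
qed

lemma case_eq1:
  assumes a1: "a = 1" and mu: "0 < \<mu>" "\<mu> < 1"
  shows "eventually (\<lambda>x. TM_op \<mu> (gamma_density a \<beta>) x \<noteq> gamma_density a \<beta> x) (at_right 0)"
proof -
  define e where "e = exp (-1/\<beta>)"
  have e0: "0 < e" unfolding e_def by simp
  have "eventually (\<lambda>x. ln x \<le> - 2 / (\<mu> * e) - 1) (at_right 0)"
    using ln_at_0 unfolding filterlim_at_bot by blast
  moreover have "eventually (\<lambda>x::real. x < 1) (at_right 0)" using ev_small[of 1] by simp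
  moreover have "eventually (\<lambda>x::real. 0 < x) (at_right 0)" by (rule eventually_at_right_less)
  ultimately show ?thesis
  proof eventually_elim
    case (elim x)
    have I: "integral {x..1} (\<lambda>u. u powr (a-2)) = - ln x"
      using integral_unique[OF int_inv[of x 1]] elim a1 by simp
    have "e / CC * (- ln x) \<le> S_op (gamma_density a \<beta>) x"
      using S_lower[of x 1] elim I by (simp add: e_def)
    then have "\<mu>/2 * (e / CC * (- ln x)) \<le> TM_op \<mu> (gamma_density a \<beta>) x"
      using mult_left_mono[of _ _ "\<mu>/2"] TM_ge[of \<mu> x] mu by (meson less_eq_real_def order_trans half_gt_zero)
    moreover have "gamma_density a \<beta> x \<le> 1 / CC" using q_le[of x] elim a1 by simp
    moreover have "1 / CC < \<mu>/2 * (e / CC * (- ln x))"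
    proof -
      have "2 / (\<mu> * e) + 1 \<le> - ln x" using elim by simp
      then have "\<mu> * e * (2 / (\<mu> * e) + 1) \<le> \<mu> * e * (- ln x)"
        using mu e0 by (intro mult_left_mono) auto
      moreover have "\<mu> * e * (2 / (\<mu> * e) + 1) = 2 + \<mu> * e" using mu e0 by (simp add: field_simps)
      ultimately have "2 + \<mu> * e \<le> \<mu> * e * (- ln x)" by linarith
      moreover have "0 < \<mu> * e" using mu e0 by simp
      ultimately have "2 < \<mu> * e * (- ln x)" by linarith
      then have "2 / CC < (\<mu> * e * (- ln x)) / CC" by (rule divide_strict_right_mono[OF _ CC_pos])
      moreover have "(\<mu> * e * (- ln x)) / CC = 2 * (\<mu>/2 * (e / CC * (- ln x)))" by simp
      ultimately show ?thesis by linarith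
    qed
    ultimately show ?case by linarith
  qed
qed

lemma case_A:
  assumes a1: "a < 1" and mu: "0 < \<mu>" "\<mu> < 1" and r1: "1 < \<mu> / (2*(1-a))"
  shows "eventually (\<lambda>x. TM_op \<mu> (gamma_density a \<beta>) x \<noteq> gamma_density a \<beta> x) (at_right 0)"
proof -
  define r where "r = \<mu> / (2*(1-a))"
  have r1': "1 < r" using r1 r_def by simp
  define y where "y = \<beta> * ln r / 2"
  have y0: "0 < y" unfolding y_def using r1' bpos by simp
  define e where "e = exp (-y/\<beta>)"
  have e0: "0 < e" unfolding e_def by simp
  define s where "s = r * e"
  have "s = exp (ln r) * exp (- (ln r / 2))" unfolding s_def e_def y_def using r1' bpos by simp
  also have "\<dots> = exp (ln r / 2)" by (simp add: exp_add[symmetric])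
  finally have s1: "1 < s" using r1' by simp
  define Py where "Py = y powr (a-1)"
  have Py0: "0 < Py" unfolding Py_def using y0 by simp
  have "eventually (\<lambda>x. x powr (1-a) < (s-1)/(s*Py)) (at_right 0)"
    using a1 s1 Py0 by (intro ev_powr_small) auto
  moreover have "eventually (\<lambda>x::real. x < y) (at_right 0)" using ev_small[OF y0] by simp
  moreover have "eventually (\<lambda>x::real. 0 < x) (at_right 0)" by (rule eventually_at_right_less)
  ultimately show ?thesis
  proof eventually_elim
    case (elim x)
    define P where "P = x powr (a-1)"
    have PL: "s*Py/(s-1) < P" using inv_large[of x a "(s-1)/(s*Py)"] elim by (simp add: P_def)
    have I: "integral {x..y} (\<lambda>u. u powr (a-2)) = (Py - P) / (a-1)"
      using integral_unique[OF int_powr[of x y "a-1"]] elim a1 by (simp add: P_def Py_def)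
    have "e / CC * ((Py - P) / (a-1)) \<le> S_op (gamma_density a \<beta>) x"
      using S_lower[of x y] elim I by (simp add: e_def)
    then have "\<mu>/2 * (e / CC * ((Py - P) / (a-1))) \<le> TM_op \<mu> (gamma_density a \<beta>) x"
      using mult_left_mono[of _ _ "\<mu>/2"] TM_ge[of \<mu> x] mu by (meson less_eq_real_def order_trans half_gt_zero)
    moreover have "\<mu>/2 * (e / CC * ((Py - P) / (a-1))) = s * (P - Py) / CC"
      unfolding s_def r_def using a1 CC_pos by (simp add: field_simps)
    moreover have "gamma_density a \<beta> x \<le> P / CC" using q_le elim by (simp add: P_def)
    moreover have "P / CC < s * (P - Py) / CC"
    proof -
      have "s*Py < P * (s-1)" using PL s1 by (simp add: field_simps)
      then have "P < s * (P - Py)" by (simp add: algebra_simps)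
      then show ?thesis by (rule divide_strict_right_mono[OF _ CC_pos])
    qed
    ultimately show ?case by linarith
  qed
qed

lemma S_bound:
  assumes a1: "a < 1" and u: "0 < u" "u \<le> \<beta>"
  shows "S_op (gamma_density a \<beta>) u \<le> ((1/(1-a) + 1) / CC) * u powr (a-1)"
proof -
  have "\<beta> powr (a-1) \<le> u powr (a-1)" using u a1 by (intro powr_mono2') auto
  moreover have "0 \<le> \<beta> powr (a-1)" by simp
  ultimately have "(u powr (a-1) - \<beta> powr (a-1)) / ((1-a) * CC) + \<beta> powr (a-1) / CC
      \<le> u powr (a-1) / ((1-a) * CC) + u powr (a-1) / CC"
    using a1 CC_pos by (intro add_mono divide_right_mono) auto
  also have "\<dots> = ((1/(1-a) + 1) / CC) * u powr (a-1)" using a1 CC_pos by (simp add: field_simps)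
  finally show ?thesis using S_upper[OF a1 u] by linarith
qed

lemma case_B_bound:
  assumes a1: "a < 1" and mu: "0 < \<mu>" "\<mu> < 1" and x: "0 < x" "x \<le> \<beta>"
  defines "K1 \<equiv> (1/(1-a) + 1) / CC"
  defines "W \<equiv> (x/2) powr (a-1) * (2 * (x powr a / a))"
  defines "r \<equiv> \<mu> / (2*(1-a))"
  defines "P \<equiv> x powr (a-1)"
  defines "Pb \<equiv> \<beta> powr (a-1)"
  shows "TM_op \<mu> (gamma_density a \<beta>) x - gamma_density a \<beta> x
     \<le> (\<mu>/2 * (1/CC) * K1 + (1-\<mu>) * (K1*K1)) * W + ((r - 1) * P - Pb * (r - \<mu>/2) + x powr a / \<beta>) / CC"
proof -
  have K1: "0 \<le> K1" unfolding K1_def using a1 CC_pos by auto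
  have hA: "AA x \<le> (1/CC) * K1 * W"
    unfolding AA_def W_def
  proof (rule conv_bound[OF x(1) apos a1])
    show "0 \<le> 1/CC" using CC_pos by simp
    show "0 \<le> K1" by (rule K1)
    show "\<And>u. 0 \<le> gamma_density a \<beta> u" by (rule q_nonneg)
    show "\<And>u. 0 \<le> S_op (gamma_density a \<beta>) u" by (rule S_nonneg)
    show "\<And>u. 0 < u \<Longrightarrow> u < x \<Longrightarrow> gamma_density a \<beta> u \<le> 1 / CC * u powr (a-1)"
      using q_le by simp
    show "\<And>u. 0 < u \<Longrightarrow> u < x \<Longrightarrow> S_op (gamma_density a \<beta>) u \<le> K1 * u powr (a-1)"
      unfolding K1_def using S_bound[OF a1] x by simp
  qed
  have hT: "T_op (gamma_density a \<beta>) x \<le> K1 * K1 * W"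
    unfolding T_op_def W_def
  proof (rule conv_bound[OF x(1) apos a1])
    show "0 \<le> K1" by (rule K1)
    show "0 \<le> K1" by (rule K1)
    show "\<And>u. 0 \<le> S_op (gamma_density a \<beta>) u" by (rule S_nonneg)
    show "\<And>u. 0 \<le> S_op (gamma_density a \<beta>) u" by (rule S_nonneg)
    show "\<And>u. 0 < u \<Longrightarrow> u < x \<Longrightarrow> S_op (gamma_density a \<beta>) u \<le> K1 * u powr (a-1)"
      unfolding K1_def using S_bound[OF a1] x by simp
    show "\<And>u. 0 < u \<Longrightarrow> u < x \<Longrightarrow> S_op (gamma_density a \<beta>) u \<le> K1 * u powr (a-1)"
      unfolding K1_def using S_bound[OF a1] x by simp
  qed
  have hS: "S_op (gamma_density a \<beta>) x \<le> (P - Pb) / ((1-a) * CC) + Pb / CC"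
    using S_upper[OF a1 x] unfolding P_def Pb_def .
  have hq: "P * (1 - x/\<beta>) / CC \<le> gamma_density a \<beta> x"
  proof -
    have "1 - x/\<beta> \<le> exp (-x/\<beta>)" using exp_ge_add_one_self[of "-x/\<beta>"] by simp
    then have "P * (1 - x/\<beta>) \<le> P * exp (-x/\<beta>)" unfolding P_def by (intro mult_left_mono) auto
    then show ?thesis using CC_pos x by (simp add: q_pos P_def divide_right_mono)
  qed
  have t1: "TM_op \<mu> (gamma_density a \<beta>) x \<le> \<mu>/2 * ((1/CC) * K1 * W) + \<mu>/2 * ((P - Pb) / ((1-a) * CC) + Pb / CC) + (1-\<mu>) * (K1 * K1 * W)"
    unfolding TM_expand using hA hT hS mu by (intro add_mono mult_left_mono) auto
  have Px: "P * x = x powr a" unfolding P_def using pw[of x "a+1"] x by (simp add: field_simps)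
  have e1: "\<mu>/2 * ((1/CC) * K1 * W) + (1-\<mu>) * (K1 * K1 * W) = (\<mu>/2 * (1/CC) * K1 + (1-\<mu>) * (K1*K1)) * W"
    by (simp add: algebra_simps)
  have e4: "((r - 1) * P - Pb * (r - \<mu>/2) + P * x / \<beta>) / CC = ((r - 1) * P - Pb * (r - \<mu>/2) + x powr a / \<beta>) / CC"
    using Px by simp
  have e3: "\<mu>/2 * ((P - Pb) / ((1-a) * CC) + Pb / CC) - P * (1 - x/\<beta>) / CC
      = ((r - 1) * P - Pb * (r - \<mu>/2) + P * x / \<beta>) / CC"
    unfolding r_def using alg_id[of "1-a" CC \<beta> \<mu> P Pb x] a1 CC_pos bpos by simp
  show ?thesis using t1 e1 e3 e4 hq by linarith
qed

lemma case_B: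
  assumes a1: "a < 1" and mu: "0 < \<mu>" "\<mu> < 1" and r1: "\<mu> / (2*(1-a)) \<le> 1"
  shows "eventually (\<lambda>x. TM_op \<mu> (gamma_density a \<beta>) x \<noteq> gamma_density a \<beta> x) (at_right 0)"
proof -
  define K1 where "K1 = (1/(1-a) + 1) / CC"
  define r where "r = \<mu> / (2*(1-a))"
  define Pb where "Pb = \<beta> powr (a-1)"
  define Kc where "Kc = \<mu>/2 * (1/CC) * K1 + (1-\<mu>) * (K1*K1)"
  define w where "w = 2 / (a * 2 powr (a-1))"
  define D where "D = Pb * (r - \<mu>/2)"
  define M where "M = CC * Kc * w"
  have K10: "0 \<le> K1" unfolding K1_def using a1 CC_pos by auto
  have M0: "0 \<le> M" unfolding M_def Kc_def w_def using CC_pos K10 mu apos by auto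
  have D0: "0 < D"
  proof -
    have "1 < 1/(1-a)" using a1 apos by (simp add: field_simps)
    then have "\<mu>/2 * 1 < \<mu>/2 * (1/(1-a))" using mu by (intro mult_strict_left_mono) auto
    moreover have "\<mu>/2 * (1/(1-a)) = r" unfolding r_def by simp
    ultimately have "\<mu>/2 < r" by linarith
    then show ?thesis unfolding D_def Pb_def using bpos by simp
  qed
  have main: "CC * (TM_op \<mu> (gamma_density a \<beta>) x - gamma_density a \<beta> x)
       \<le> M * (x powr (a-1) * x powr a) + (r - 1) * x powr (a-1) - D + x powr a / \<beta>"
    if x: "0 < x" "x \<le> \<beta>" for x
  proof -
    have "(x/2) powr (a-1) = x powr (a-1) / 2 powr (a-1)" using x by (simp add: powr_divide)
    then have W: "(x/2) powr (a-1) * (2 * (x powr a / a)) = w * (x powr (a-1) * x powr a)"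
      unfolding w_def by (simp add: ac_simps)
    have "TM_op \<mu> (gamma_density a \<beta>) x - gamma_density a \<beta> x
      \<le> Kc * (w * (x powr (a-1) * x powr a)) + ((r - 1) * x powr (a-1) - D + x powr a / \<beta>) / CC"
      using case_B_bound[OF a1 mu x] unfolding W Kc_def K1_def r_def D_def Pb_def by simp
    then have "CC * (TM_op \<mu> (gamma_density a \<beta>) x - gamma_density a \<beta> x)
      \<le> CC * (Kc * (w * (x powr (a-1) * x powr a)) + ((r - 1) * x powr (a-1) - D + x powr a / \<beta>) / CC)"
      using CC_pos by (intro mult_left_mono) auto
    also have "\<dots> = M * (x powr (a-1) * x powr a) + (r - 1) * x powr (a-1) - D + x powr a / \<beta>"
      unfolding M_def using CC_pos by (simp add: field_simps)
    finally show ?thesis .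
  qed
  have neg: "TM_op \<mu> (gamma_density a \<beta>) x \<noteq> gamma_density a \<beta> x"
    if x: "0 < x" "x \<le> \<beta>" and lt: "M * (x powr (a-1) * x powr a) + (r - 1) * x powr (a-1) - D + x powr a / \<beta> < 0" for x
    using main[OF x] lt CC_pos by auto
  show ?thesis
  proof (cases "r < 1")
    case True
    have "eventually (\<lambda>x. x powr a < min ((1-r)/(M+1)) (D*\<beta>)) (at_right 0)"
      using True M0 D0 bpos apos by (intro ev_powr_small) auto
    moreover have "eventually (\<lambda>x::real. x < \<beta>) (at_right 0)" using ev_small[OF bpos] by simp
    moreover have "eventually (\<lambda>x::real. 0 < x) (at_right 0)" by (rule eventually_at_right_less)
    ultimately show ?thesis
    proof eventually_elim
      case (elim x)
      define P where "P = x powr (a-1)"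
      define X where "X = x powr a"
      have P0: "0 \<le> P" "0 \<le> X" unfolding P_def X_def by auto
      have "X < (1-r)/(M+1)" using elim X_def by simp
      then have "X * (M+1) < 1 - r" using M0 by (simp add: field_simps)
      then have "M * X \<le> 1 - r" using P0 by (simp add: algebra_simps)
      then have "P * (M * X) \<le> P * (1 - r)" using P0 by (intro mult_left_mono) auto
      moreover have "X / \<beta> < D" using elim X_def bpos by (simp add: field_simps)
      ultimately have "M * (P * X) + (r - 1) * P - D + X / \<beta> < 0" by (simp add: algebra_simps)
      then show ?case using neg[of x] elim unfolding P_def X_def by simp
    qed
  next
    case False
    then have r: "r = 1" using r1 r_def by simp
    then have e: "2*a - 1 = 1 - \<mu>" unfolding r_def using a1 by (simp add: field_simps)
    have "eventually (\<lambda>x. x powr (2*a-1) < D / (2*(M+1))) (at_right 0)"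
      using e mu M0 D0 by (intro ev_powr_small) auto
    moreover have "eventually (\<lambda>x. x powr a < D*\<beta>/2) (at_right 0)"
      using D0 bpos apos by (intro ev_powr_small) auto
    moreover have "eventually (\<lambda>x::real. x < \<beta>) (at_right 0)" using ev_small[OF bpos] by simp
    moreover have "eventually (\<lambda>x::real. 0 < x) (at_right 0)" by (rule eventually_at_right_less)
    ultimately show ?thesis
    proof eventually_elim
      case (elim x)
      define Q where "Q = x powr (a-1) * x powr a"
      define X where "X = x powr a"
      have Q: "Q = x powr (2*a-1)" unfolding Q_def using elim by (simp add: powr_add[symmetric])
      have Q0: "0 \<le> Q" unfolding Q by simp
      have "Q < D / (2*(M+1))" using elim Q by simp
      then have "Q * (M+1) < D/2" using M0 by (simp add: field_simps)
      then have "M * Q < D/2" using Q0 by (simp add: algebra_simps)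
      moreover have "X / \<beta> < D/2" using elim X_def bpos by (simp add: field_simps)
      moreover have "(r - 1) * x powr (a-1) = 0" using r by simp
      ultimately have "M * Q + (r - 1) * x powr (a-1) - D + X / \<beta> < 0" by linarith
      then show ?case using neg[of x] elim unfolding Q_def X_def by simp
    qed
  qed
qed

lemma all_cases:
  assumes mu: "0 < \<mu>" "\<mu> < 1"
  shows "eventually (\<lambda>x. TM_op \<mu> (gamma_density a \<beta>) x \<noteq> gamma_density a \<beta> x) (at_right 0)"
proof -
  consider "a < 1" "1 < \<mu> / (2*(1-a))" | "a < 1" "\<mu> / (2*(1-a)) \<le> 1" | "a = 1" | "1 < a" by linarith
  then show ?thesis
  proof cases
    case 1 then show ?thesis using case_A mu by blast
  next
    case 2 then show ?thesis using case_B mu by blast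
  next
    case 3 then show ?thesis using case_eq1 mu by blast
  next
    case 4 then show ?thesis using case_gt1 mu by blast
  qed
qed

end

theorem mainTheorem6:
  fixes \<mu> a \<beta> :: real
  assumes "0 < \<mu>" "\<mu> < 1" "0 < a" "0 < \<beta>"
  shows "\<not> (\<forall>x>0. TM_op \<mu> (gamma_density a \<beta>) x = gamma_density a \<beta> x)"
proof
  assume H: "\<forall>x>0. TM_op \<mu> (gamma_density a \<beta>) x = gamma_density a \<beta> x"
  obtain x where "x > 0" "TM_op \<mu> (gamma_density a \<beta>) x \<noteq> gamma_density a \<beta> x"
    using ev_exists[OF all_cases[OF assms(3,4,1,2)]] by blast
  then show False using H by blast
qed

end
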